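(* Let $M$ be a $*$-left Ehresmann monoid and $H\subseteq M$ an atomic subset. Then $H$ is proper if and only if for all $h,k\in H$: $h\,\sigma\,k$ holds exactly when $hk^*=kh^*$.
   Context: A $*$-left Ehresmann monoid is a monoid $M$ with unary operations $+,*$ such that $x^+x=x$, $(x^+y^+)^+=x^+y^+$, $x^+y^+=y^+x^+$, $(xy)^+=(xy^+)^+$, $xx^*=x$, $(x^* )^*=x^*$, $x^*y^*=y^*x^*$, $(xy^* )^*y^*=(xy^* )^*$, $(x^* )^+=x^*$, $(x^+)^*=x^+$. Its semilattice of projections is $E=\{a^+\}=\{a^*\}$ (ordered by $e\le f$ iff $ef=e$); $\sigma$ is the least monoid congruence on $M$ containing $E\times E$. $H\subseteq M$ is atomic if: (H1) $E\subseteq H$; (H2) $h\in H,e\in E$ imply $he\in H$ and $(he)^*=h^*e$; (H3) if $h\in H$, $k\in H\setminus E$, $h^*\ge k^+$ then $hk\in H$ and $(hk)^*=k^*$; (H4) every $m\in M$ is $\sigma$-related to some $h\in H$; (H5) if $h,k,w\in H$, $hk\,\sigma\,w$ and $k^*=w^*$, then some $u\in H$ has $u\,\sigma\,h$ and $u^*\ge k^+$. $H$ is proper if for all $h,k\in H$: ($h^*=k^*$ and $h\,\sigma\,k$) iff $h=k$. *)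

theory Defs
  imports Main
begin

definition star_left_ehresmann :: "('a::monoid_mult \<Rightarrow> 'a) \<Rightarrow> ('a \<Rightarrow> 'a) \<Rightarrow> bool" where
  "star_left_ehresmann pl st \<longleftrightarrow>
     (\<forall>x. pl x * x = x) \<and>
     (\<forall>x y. pl (pl x * pl y) = pl x * pl y) \<and>
     (\<forall>x y. pl x * pl y = pl y * pl x) \<and>
     (\<forall>x y. pl (x * y) = pl (x * pl y)) \<and>
     (\<forall>x. x * st x = x) \<and>
     (\<forall>x. st (st x) = st x) \<and>
     (\<forall>x y. st x * st y = st y * st x) \<and>
     (\<forall>x y. st (x * st y) * st y = st (x * st y)) \<and>
     (\<forall>x. pl (st x) = st x) \<and>
     (\<forall>x. st (pl x) = pl x)"

text \<open>Semilattice of projections E = {a^+} (which equals {a^*}).\<close>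
definition projections :: "('a::monoid_mult \<Rightarrow> 'a) \<Rightarrow> 'a set" where
  "projections pl = range pl"

definition proj_le :: "'a::monoid_mult \<Rightarrow> 'a \<Rightarrow> bool" where
  "proj_le e f \<longleftrightarrow> e * f = e"

definition monoid_congruence :: "('a::monoid_mult \<times> 'a) set \<Rightarrow> bool" where
  "monoid_congruence R \<longleftrightarrow> equiv UNIV R \<and>
     (\<forall>a b c d. (a, b) \<in> R \<longrightarrow> (c, d) \<in> R \<longrightarrow> (a * c, b * d) \<in> R)"

definition sigma :: "('a::monoid_mult \<Rightarrow> 'a) \<Rightarrow> ('a \<times> 'a) set" where
  "sigma pl = \<Inter>{R. monoid_congruence R \<and> projections pl \<times> projections pl \<subseteq> R}"

definition atomic :: "('a::monoid_mult \<Rightarrow> 'a) \<Rightarrow> ('a \<Rightarrow> 'a) \<Rightarrow> 'a set \<Rightarrow> bool" where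
  "atomic pl st H \<longleftrightarrow>
     projections pl \<subseteq> H \<and>
     (\<forall>h\<in>H. \<forall>e\<in>projections pl. h * e \<in> H \<and> st (h * e) = st h * e) \<and>
     (\<forall>h\<in>H. \<forall>k\<in>H - projections pl. proj_le (pl k) (st h) \<longrightarrow>
         h * k \<in> H \<and> st (h * k) = st k) \<and>
     (\<forall>m. \<exists>h\<in>H. (m, h) \<in> sigma pl) \<and>
     (\<forall>h\<in>H. \<forall>k\<in>H. \<forall>w\<in>H. (h * k, w) \<in> sigma pl \<longrightarrow> st k = st w \<longrightarrow>
         (\<exists>u\<in>H. (u, h) \<in> sigma pl \<and> proj_le (pl k) (st u)))"

definition proper :: "('a::monoid_mult \<Rightarrow> 'a) \<Rightarrow> ('a \<Rightarrow> 'a) \<Rightarrow> 'a set \<Rightarrow> bool" where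
  "proper pl st H \<longleftrightarrow>
     (\<forall>h\<in>H. \<forall>k\<in>H. (st h = st k \<and> (h, k) \<in> sigma pl) \<longleftrightarrow> h = k)"

end

theory Submission
  imports Defs
begin

lemma sigma_I:
  assumes "\<And>R. monoid_congruence R \<Longrightarrow> projections pl \<times> projections pl \<subseteq> R \<Longrightarrow> (a, b) \<in> R"
  shows "(a, b) \<in> sigma pl"
  using assms unfolding sigma_def by blast

lemma sigma_refl: "(a, a) \<in> sigma (pl::'a::monoid_mult \<Rightarrow> 'a)"
proof (rule sigma_I)
  fix R :: "('a \<times> 'a) set" assume "monoid_congruence R"
  then have "equiv UNIV R" unfolding monoid_congruence_def by blast
  then show "(a, a) \<in> R" by (meson UNIV_I equivE refl_onD)
qed

lemma sigma_sym: "(a, b) \<in> sigma pl \<Longrightarrow> (b, a) \<in> sigma pl"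
proof (rule sigma_I)
  fix R assume "(a, b) \<in> sigma pl" "monoid_congruence R" "projections pl \<times> projections pl \<subseteq> R"
  then have "(a, b) \<in> R" "equiv UNIV R" unfolding sigma_def monoid_congruence_def by blast+
  then show "(b, a) \<in> R" by (meson equivE symD transD)
qed

lemma sigma_trans: "(a, b) \<in> sigma pl \<Longrightarrow> (b, c) \<in> sigma pl \<Longrightarrow> (a, c) \<in> sigma pl"
proof (rule sigma_I)
  fix R assume "(a, b) \<in> sigma pl" "(b, c) \<in> sigma pl" "monoid_congruence R" "projections pl \<times> projections pl \<subseteq> R"
  then have "(a, b) \<in> R" "(b, c) \<in> R" "equiv UNIV R" unfolding sigma_def monoid_congruence_def by blast+
  then show "(a, c) \<in> R" by (meson equivE symD transD)
qed

lemma sigma_mult: "(a, b) \<in> sigma pl \<Longrightarrow> (c, d) \<in> sigma pl \<Longrightarrow> (a * c, b * d) \<in> sigma pl"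
  unfolding sigma_def monoid_congruence_def by auto

lemma sigma_proj: "e \<in> projections pl \<Longrightarrow> f \<in> projections pl \<Longrightarrow> (e, f) \<in> sigma pl"
  unfolding sigma_def by auto

theorem mainTheorem6:
  fixes pl st :: "'a::monoid_mult \<Rightarrow> 'a" and H :: "'a set"
  assumes "star_left_ehresmann pl st"
    and "atomic pl st H"
  shows "proper pl st H \<longleftrightarrow>
    (\<forall>h\<in>H. \<forall>k\<in>H. (h, k) \<in> sigma pl \<longleftrightarrow> h * st k = k * st h)"
proof -
  have A1: "\<And>x. pl x * x = x" and A5: "\<And>x. x * st x = x"
    and A7: "\<And>x y. st x * st y = st y * st x" and A9: "\<And>x. pl (st x) = st x"
    using assms(1) unfolding star_left_ehresmann_def by auto
  have one: "(1::'a) \<in> projections pl"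
    unfolding projections_def using A1[of 1] by (metis mult.right_neutral rangeI)
  have stE: "\<And>x. st x \<in> projections pl"
    unfolding projections_def by (metis A9 rangeI)
  have H2: "\<And>h e. h \<in> H \<Longrightarrow> e \<in> projections pl \<Longrightarrow> h * e \<in> H \<and> st (h * e) = st h * e"
    using assms(2) unfolding atomic_def by blast
  have rs: "\<And>h e. e \<in> projections pl \<Longrightarrow> (h * e, h) \<in> sigma pl"
    using sigma_mult[OF sigma_refl sigma_proj[OF _ one]] by (metis mult.right_neutral)
  have easy: "\<And>h k. h * st k = k * st h \<Longrightarrow> (h, k) \<in> sigma pl"
    by (metis rs stE sigma_sym sigma_trans)
  show ?thesis
  proof
    assume P: "proper pl st H"
    show "\<forall>h\<in>H. \<forall>k\<in>H. (h, k) \<in> sigma pl \<longleftrightarrow> h * st k = k * st h"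
    proof (intro ballI iffI)
      fix h k assume h: "h \<in> H" and k: "k \<in> H" and s: "(h, k) \<in> sigma pl"
      have a: "h * st k \<in> H" "st (h * st k) = st h * st k" using H2[OF h stE] by auto
      have b: "k * st h \<in> H" "st (k * st h) = st k * st h" using H2[OF k stE] by auto
      have "(h * st k, k * st h) \<in> sigma pl"
        by (metis rs stE s sigma_sym sigma_trans)
      then show "h * st k = k * st h" using P a b A7 unfolding proper_def by metis
    next
      fix h k assume "h * st k = k * st h" then show "(h, k) \<in> sigma pl" by (rule easy)
    qed
  next
    assume Q: "\<forall>h\<in>H. \<forall>k\<in>H. (h, k) \<in> sigma pl \<longleftrightarrow> h * st k = k * st h"
    show "proper pl st H" unfolding proper_def
    proof (intro ballI iffI)
      fix h k assume h: "h \<in> H" and k: "k \<in> H" and c: "st h = st k \<and> (h, k) \<in> sigma pl"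
      then have "h * st k = k * st h" using Q by blast
      then show "h = k" using c A5 by metis
    next
      fix h k :: 'a assume "h = k" then show "st h = st k \<and> (h, k) \<in> sigma pl"
        using sigma_refl by auto
    qed
  qed
qed

end
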